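(* Let $K\in\mathbb{N}_{\ge1}$ and $\delta>0$. There exists a ReLU FNN function $f^{(dsc)}_{FF}:\mathbb{R}\to\mathbb{R}$ with width $K$, depth $3$ and weight bound $1/\delta$ such that for any $k\in\{0,1,\dots,K-1\}$ and $x\in[k/K,(k+1)/K]$, $$f^{(dsc)}_{FF}(x)=\begin{cases}\dfrac kK,& x\in\big[\frac kK,\frac{k+1-\delta}{K}\big),\\[2mm] \dfrac{k+1}{K}-\dfrac{k+1-Kx}{K\delta},& x\in\big[\frac{k+1-\delta}K,\frac{k+1}K\big].\end{cases}$$
   Context: A ReLU FNN $f:\mathbb{R}^a\to\mathbb{R}^b$ of depth $L$ and width $W$: $f_0=x$, $f_l=\sigma_R(W_lf_{l-1}+b_l)$ for $1\le l\le L-1$, $f=W_Lf_{L-1}+b_L$, with $W_1\in\mathbb{R}^{W\times a}$, $W_l\in\mathbb{R}^{W\times W}$, $W_L\in\mathbb{R}^{b\times W}$, $b_l\in\mathbb{R}^W$, $b_L\in\mathbb{R}^b$, $\sigma_R(x)=\max\{x,0\}$ entrywise. Its weight bound is the maximum absolute value of all entries of the $W_l,b_l$. *)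

theory Defs
  imports Complex_Main
begin

text \<open>Vectors in R^n are represented as functions nat => real, only indices < n matter.
A layer is a pair (weight matrix, bias vector); matrices are nat => nat => real.\<close>

type_synonym layer = "(nat \<Rightarrow> nat \<Rightarrow> real) \<times> (nat \<Rightarrow> real)"

definition affine :: "nat \<Rightarrow> layer \<Rightarrow> (nat \<Rightarrow> real) \<Rightarrow> (nat \<Rightarrow> real)" where
  "affine n l x = (\<lambda>i. (\<Sum>j<n. fst l i j * x j) + snd l i)"

definition relu :: "(nat \<Rightarrow> real) \<Rightarrow> (nat \<Rightarrow> real)" where
  "relu v = (\<lambda>i. max (v i) 0)"

text \<open>Run a network; the first argument lists the input dimension of each layer.
The last layer is affine only, all earlier ones are followed by ReLU.\<close>
fun fnn_run :: "nat list \<Rightarrow> layer list \<Rightarrow> (nat \<Rightarrow> real) \<Rightarrow> (nat \<Rightarrow> real)" where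
  "fnn_run (n # ns) [l] x = affine n l x"
| "fnn_run (n # ns) (l # l' # ls) x = fnn_run ns (l' # ls) (relu (affine n l x))"
| "fnn_run _ _ x = x"

definition is_relu_fnn ::
  "nat \<Rightarrow> nat \<Rightarrow> nat \<Rightarrow> nat \<Rightarrow> real \<Rightarrow> ((nat \<Rightarrow> real) \<Rightarrow> (nat \<Rightarrow> real)) \<Rightarrow> bool" where
  "is_relu_fnn a b L W B F \<longleftrightarrow>
     (\<exists>ls :: layer list.
        let ins = a # replicate (L - 1) W; outs = replicate (L - 1) W @ [b] in
        L \<ge> 1 \<and> length ls = L \<and>
        (\<forall>l<L. \<forall>i<outs ! l. \<bar>snd (ls ! l) i\<bar> \<le> B \<and>
                              (\<forall>j<ins ! l. \<bar>fst (ls ! l) i j\<bar> \<le> B)) \<and>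
        (\<forall>x. \<forall>i<b. F x i = fnn_run ins ls x i))"

definition is_relu_fnn_real :: "nat \<Rightarrow> nat \<Rightarrow> real \<Rightarrow> (real \<Rightarrow> real) \<Rightarrow> bool" where
  "is_relu_fnn_real L W B f \<longleftrightarrow> is_relu_fnn 1 1 L W B (\<lambda>x i. f (x 0))"

end

theory Submission
  imports Defs
begin

lemma sum_split_aux:
  fixes g :: "nat \<Rightarrow> real"
  assumes "k < K" and "\<And>j. j < K \<Longrightarrow> j \<noteq> k \<Longrightarrow> g j = (if j < k then 0 else c)"
  shows "(\<Sum>j<K. g j) = real (K - Suc k) * c + g k"
proof -
  have "(\<Sum>j<K. g j) = (\<Sum>j<K. (if k < j then c else 0) + (if j = k then g k else 0))"
    by (rule sum.cong) (auto simp: assms(2))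
  also have "\<dots> = (\<Sum>j<K. (if k < j then c else 0)) + g k"
    using assms(1) by (simp add: sum.distrib)
  also have "(\<Sum>j<K. (if k < j then c else 0)) = (\<Sum>j\<in>{k<..<K}. c)"
    by (rule sum.mono_neutral_cong_right) auto
  also have "\<dots> = real (K - Suc k) * c" by simp
  finally show ?thesis .
qed

theorem lemma6:
  fixes K :: nat and \<delta> :: real
  assumes "K \<ge> 1" and "\<delta> > 0" and "\<delta> \<le> 1"
  shows "\<exists>f. is_relu_fnn_real 3 K (1 / \<delta>) f \<and>
           (\<forall>k<K. \<forall>x::real. real k / K \<le> x \<and> x \<le> (real k + 1) / K \<longrightarrow>
              f x = (if x < (real k + 1 - \<delta>) / K then real k / K
                     else (real k + 1) / K - (real k + 1 - K * x) / (K * \<delta>)))"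
proof -
  define a where "a = (\<lambda>j::nat. (real j + 1 - \<delta>) / K)"
  define g where "g = (\<lambda>x j. max (\<delta> / K - max (x - a j) 0) 0)"
  define f where "f = (\<lambda>x. 1 - (1/\<delta>) * (\<Sum>j<K. g x j))"
  have Kpos: "real K \<ge> 1" using assms(1) by simp
  have ige: "1 / \<delta> \<ge> 1" using assms by simp
  have net: "is_relu_fnn_real 3 K (1 / \<delta>) f"
    unfolding is_relu_fnn_real_def is_relu_fnn_def
  proof (rule exI[of _ "[((\<lambda>i j. 1), (\<lambda>i. - a i)),
                         ((\<lambda>i j. if i = j then -1 else 0), (\<lambda>i. \<delta> / K)),
                         ((\<lambda>i j. - 1/\<delta>), (\<lambda>i. 1))]"], simp only: Let_def, intro conjI)
    show "1 \<le> (3::nat)" by simp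
    show "length [((\<lambda>i j. 1), (\<lambda>i. - a i)),
                         ((\<lambda>i j. if i = j then -1 else 0), (\<lambda>i. \<delta> / K)),
                         ((\<lambda>i j. - 1/\<delta>), (\<lambda>i. 1))] = 3" by simp
    show "\<forall>x i. i < 1 \<longrightarrow> f (x 0) = fnn_run (1 # replicate (3 - 1) K) [((\<lambda>i j. 1), (\<lambda>i. - a i)),
                         ((\<lambda>i j. if i = j then -1 else 0), (\<lambda>i. \<delta> / K)),
                         ((\<lambda>i j. - 1/\<delta>), (\<lambda>i. 1))] x i"
    proof (intro allI impI)
      fix x :: "nat \<Rightarrow> real" and i :: nat
      assume "i < 1"
      have r: "replicate (3 - 1) K = [K, K]" by (simp add: numeral_eq_Suc)
      have inner: "(\<Sum>m<K. (if j = m then -1 else 0) * max (x 0 - a m) 0) = - max (x 0 - a j) 0"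
        if "j < K" for j
      proof -
        have "(\<Sum>m<K. (if j = m then -1 else 0) * max (x 0 - a m) 0)
              = (\<Sum>m<K. (if j = m then - max (x 0 - a m) 0 else 0))"
          by (rule sum.cong) auto
        also have "\<dots> = - max (x 0 - a j) 0" using that by simp
        finally show ?thesis .
      qed
      have "fnn_run (1 # replicate (3 - 1) K) [((\<lambda>i j. 1), (\<lambda>i. - a i)),
                         ((\<lambda>i j. if i = j then -1 else 0), (\<lambda>i. \<delta> / K)),
                         ((\<lambda>i j. - 1/\<delta>), (\<lambda>i. 1))] x i
          = (\<Sum>j<K. - 1/\<delta> * max ((\<Sum>m<K. (if j = m then -1 else 0) * max (x 0 - a m) 0) + \<delta> / K) 0) + 1"
        unfolding r by (simp add: affine_def relu_def)
      also have "\<dots> = (\<Sum>j<K. - 1/\<delta> * g (x 0) j) + 1"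
        by (rule arg_cong[where f="\<lambda>t. t + 1"], rule sum.cong) (auto simp: inner g_def)
      also have "\<dots> = f (x 0)"
        by (simp add: f_def sum_distrib_left[symmetric] sum_negf sum_divide_distrib)
      finally show "f (x 0) = fnn_run (1 # replicate (3 - 1) K) [((\<lambda>i j. 1), (\<lambda>i. - a i)),
                         ((\<lambda>i j. if i = j then -1 else 0), (\<lambda>i. \<delta> / K)),
                         ((\<lambda>i j. - 1/\<delta>), (\<lambda>i. 1))] x i" by simp
    qed
    show "\<forall>l<3. \<forall>i<(replicate (3 - 1) K @ [1]) ! l.
        \<bar>snd ([((\<lambda>i j. 1), (\<lambda>i. - a i)),
                         ((\<lambda>i j. if i = j then -1 else 0), (\<lambda>i. \<delta> / K)),
                         ((\<lambda>i j. - 1/\<delta>), (\<lambda>i. 1))] ! l) i\<bar> \<le> 1 / \<delta> \<and>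
        (\<forall>j<(1 # replicate (3 - 1) K) ! l. \<bar>fst ([((\<lambda>i j. 1), (\<lambda>i. - a i)),
                         ((\<lambda>i j. if i = j then -1 else 0), (\<lambda>i. \<delta> / K)),
                         ((\<lambda>i j. - 1/\<delta>), (\<lambda>i. 1))] ! l) i j\<bar> \<le> 1 / \<delta>)"
    proof (intro allI impI)
      fix l i :: nat
      assume l: "l < 3" and i: "i < (replicate (3 - 1) K @ [1]) ! l"
      have r: "replicate (3 - 1) K = [K, K]" by (simp add: numeral_eq_Suc)
      have "l = 0 \<or> l = 1 \<or> l = 2" using l by auto
      moreover have "\<bar>a i\<bar> \<le> 1 / \<delta>" if "i < K"
      proof -
        have "real i + 1 \<le> real K" using that by simp
        hence "real i + 1 - \<delta> \<le> K" "0 \<le> real i + 1 - \<delta>" using assms by auto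
        hence "\<bar>a i\<bar> \<le> 1" unfolding a_def using Kpos by (simp add: abs_le_iff divide_le_eq)
        thus ?thesis using ige by linarith
      qed
      moreover have "\<delta> / K \<le> 1 / \<delta>"
      proof -
        have "\<delta> / K \<le> 1" using assms Kpos by (simp add: divide_le_eq)
        thus ?thesis using ige by linarith
      qed
      moreover have "\<bar>1/\<delta>\<bar> \<le> 1/\<delta>" using assms by simp
      ultimately show "\<bar>snd ([((\<lambda>i j. 1), (\<lambda>i. - a i)),
                         ((\<lambda>i j. if i = j then -1 else 0), (\<lambda>i. \<delta> / K)),
                         ((\<lambda>i j. - 1/\<delta>), (\<lambda>i. 1))] ! l) i\<bar> \<le> 1 / \<delta> \<and>
        (\<forall>j<(1 # replicate (3 - 1) K) ! l. \<bar>fst ([((\<lambda>i j. 1), (\<lambda>i. - a i)),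
                         ((\<lambda>i j. if i = j then -1 else 0), (\<lambda>i. \<delta> / K)),
                         ((\<lambda>i j. - 1/\<delta>), (\<lambda>i. 1))] ! l) i j\<bar> \<le> 1 / \<delta>)"
        using i ige assms unfolding r by (auto simp: nth_append)
    qed
  qed
  have val: "f x = (if x < (real k + 1 - \<delta>) / K then real k / K
                     else (real k + 1) / K - (real k + 1 - K * x) / (K * \<delta>))"
    if k: "k < K" and x1: "real k / K \<le> x" and x2: "x \<le> (real k + 1) / K" for k and x :: real
  proof -
    have Kx1: "real k \<le> K * x" using x1 Kpos by (simp add: divide_le_eq mult.commute)
    have Kx2: "K * x \<le> real k + 1" using x2 Kpos by (simp add: le_divide_eq mult.commute)
    have gj: "g x j = (if j < k then 0 else \<delta> / K)" if "j < K" "j \<noteq> k" for j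
    proof (cases "j < k")
      case True
      hence "real j + 1 \<le> real k" by simp
      hence "x - a j \<ge> \<delta> / K" using Kx1 Kpos unfolding a_def
        by (simp add: field_simps)
      thus ?thesis using True unfolding g_def by simp
    next
      case False
      hence "real k + 1 \<le> real j" using that by simp
      hence "x - a j \<le> 0" using Kx2 Kpos assms unfolding a_def
        by (simp add: field_simps)
      thus ?thesis using False assms Kpos unfolding g_def by simp
    qed
    have S: "(\<Sum>j<K. g x j) = real (K - Suc k) * (\<delta> / K) + g x k"
      by (rule sum_split_aux[OF k]) (use gj in auto)
    have KS: "real (K - Suc k) = real K - real k - 1" using k by simp
    have fx: "f x = (real k + 1) / K - g x k / \<delta>"
      unfolding f_def S KS using assms Kpos by (simp add: field_simps)
    show ?thesis
    proof (cases "x < (real k + 1 - \<delta>) / K")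
      case True
      hence "g x k = \<delta> / K" unfolding g_def a_def using assms Kpos by simp
      thus ?thesis using True fx assms Kpos by (simp add: field_simps)
    next
      case False
      hence h: "x - a k \<ge> 0" unfolding a_def by simp
      have ak: "a k + \<delta> / K = (real k + 1) / K" unfolding a_def by (simp add: add_divide_distrib[symmetric])
      hence "x - a k \<le> \<delta> / K" using x2 by linarith
      hence "g x k = \<delta> / K - (x - a k)" unfolding g_def using h by simp
      also have "\<dots> = (real k + 1) / K - x" using ak by linarith
      also have "\<dots> = (real k + 1 - K * x) / K" using Kpos by (simp add: diff_divide_distrib)
      finally have "g x k / \<delta> = (real k + 1 - K * x) / (K * \<delta>)" by (simp only: divide_divide_eq_left)
      thus ?thesis using False fx by simp
    qed
  qed
  show ?thesis using net val by blast
qed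

end
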